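(* Let $(X,D,K)$ be a complete $b$-metric-like space with constant $K\ge 1$. Assume that $S,T:X\to X$ are onto (surjective) mappings such that $$D(Tx,Sy)\geq \Big[R+L\min\{D^s(x,Tx),\,D^s(y,Sy),\,D^s(x,Sy),\,D^s(y,Tx)\}\Big]D(x,y)$$ for all $x,y\in X$, where $R>K$ and $L\geq 0$ are constants. Then $T$ and $S$ have a unique common fixed point, i.e. there is a unique $z\in X$ with $Tz=Sz=z$.
   Context: A $b$-metric-like space $(X,D,K)$ is a set $X$ with a function $D:X\times X\to[0,\infty)$ and a constant $K\ge 1$ such that for all $x,y,z\in X$: (i) $D(x,y)=0\Rightarrow x=y$; (ii) $D(x,y)=D(y,x)$; (iii) $D(x,y)\le K[D(x,z)+D(z,y)]$. (Note $D(x,x)$ need not be $0$.) A sequence $\{x_n\}$ converges to $x$ if $\lim_{n\to\infty}D(x_n,x)=D(x,x)$. A sequence $\{x_n\}$ is Cauchy if $\lim_{n,m\to\infty}D(x_n,x_m)$ exists and is finite. The space is complete if every Cauchy sequence $\{x_n\}$ converges to some $x\in X$ with $\lim_{n,m\to\infty}D(x_n,x_m)=D(x,x)=\lim_{n\to\infty}D(x_n,x)$. Notation: $D^s(x,y)=|2D(x,y)-D(x,x)-D(y,y)|$ for $x,y\in X$. *)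

theory Defs
  imports "HOL-Analysis.Analysis"
begin

definition b_metric_like :: "('a \<Rightarrow> 'a \<Rightarrow> real) \<Rightarrow> real \<Rightarrow> bool" where
  "b_metric_like D K \<longleftrightarrow> K \<ge> 1 \<and>
     (\<forall>x y. D x y \<ge> 0) \<and>
     (\<forall>x y. D x y = 0 \<longrightarrow> x = y) \<and>
     (\<forall>x y. D x y = D y x) \<and>
     (\<forall>x y z. D x y \<le> K * (D x z + D z y))"

definition bml_converges :: "('a \<Rightarrow> 'a \<Rightarrow> real) \<Rightarrow> (nat \<Rightarrow> 'a) \<Rightarrow> 'a \<Rightarrow> bool" where
  "bml_converges D s x \<longleftrightarrow> ((\<lambda>n. D (s n) x) \<longlonglongrightarrow> D x x)"

definition bml_cauchy :: "('a \<Rightarrow> 'a \<Rightarrow> real) \<Rightarrow> (nat \<Rightarrow> 'a) \<Rightarrow> bool" where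
  "bml_cauchy D s \<longleftrightarrow> (\<exists>l::real. ((\<lambda>(n,m). D (s n) (s m)) \<longlongrightarrow> l) (sequentially \<times>\<^sub>F sequentially))"

definition bml_complete :: "('a \<Rightarrow> 'a \<Rightarrow> real) \<Rightarrow> bool" where
  "bml_complete D \<longleftrightarrow> (\<forall>s. bml_cauchy D s \<longrightarrow>
     (\<exists>x. ((\<lambda>(n,m). D (s n) (s m)) \<longlongrightarrow> D x x) (sequentially \<times>\<^sub>F sequentially)
          \<and> ((\<lambda>n. D (s n) x) \<longlonglongrightarrow> D x x)))"

definition Ds :: "('a \<Rightarrow> 'a \<Rightarrow> real) \<Rightarrow> 'a \<Rightarrow> 'a \<Rightarrow> real" where
  "Ds D x y = \<bar>2 * D x y - D x x - D y y\<bar>"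

end

theory Submission
  imports Defs
begin

theorem theorem2p1:
  fixes D :: "'a \<Rightarrow> 'a \<Rightarrow> real" and K R L :: real and S T :: "'a \<Rightarrow> 'a"
  assumes "b_metric_like D K"
    and "bml_complete D"
    and "surj S" and "surj T"
    and "R > K" and "L \<ge> 0"
    and "\<forall>x y. D (T x) (S y) \<ge>
          (R + L * Min {Ds D x (T x), Ds D y (S y), Ds D x (S y), Ds D y (T x)}) * D x y"
  shows "\<exists>!z. T z = z \<and> S z = z"
proof -
  have K1: "K \<ge> 1" and nn: "\<And>x y. D x y \<ge> 0" and z0: "\<And>x y. D x y = 0 \<Longrightarrow> x = y"
    and sym: "\<And>x y. D x y = D y x" and tri: "\<And>x y z. D x y \<le> K * (D x z + D z y)"
    using assms(1) unfolding b_metric_like_def by auto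
  have R0: "R > 1" using K1 assms(5) by linarith
  have E: "R * D x y \<le> D (T x) (S y)" for x y
  proof -
    have "0 \<le> Min {Ds D x (T x), Ds D y (S y), Ds D x (S y), Ds D y (T x)}"
      by (simp add: Ds_def)
    hence "0 \<le> L * Min {Ds D x (T x), Ds D y (S y), Ds D x (S y), Ds D y (T x)} * D x y"
      using assms(6) nn by simp
    thus ?thesis using assms(7)[rule_format, of x y] by (simp add: algebra_simps)
  qed
  have E': "D x y \<le> D (T x) (S y) / R" for x y
    using E[of x y] R0 by (simp add: field_simps)
  have uniq: "z = z'" if "T z = z" "S z = z" "T z' = z'" "S z' = z'" for z z'
  proof -
    have "R * D z z' \<le> D z z'" using E[of z z'] that by simp
    hence "(R - 1) * D z z' \<le> 0" by (simp add: algebra_simps)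
    moreover have "(R - 1) * D z z' \<ge> 0" using R0 nn[of z z'] by simp
    ultimately have "(R - 1) * D z z' = 0" by linarith
    hence "D z z' = 0" using R0 by simp
    thus ?thesis by (rule z0)
  qed
  define x where "x = rec_nat (undefined::'a) (\<lambda>n a. if even n then inv T a else inv S a)"
  have x0: "x (Suc n) = (if even n then inv T (x n) else inv S (x n))" for n
    by (simp add: x_def)
  have xT: "T (x (Suc n)) = x n" if "even n" for n
    using that x0[of n] assms(4) by (simp add: surj_f_inv_f)
  have xS: "S (x (Suc n)) = x n" if "odd n" for n
    using that x0[of n] assms(3) by (simp add: surj_f_inv_f)
  define q where "q = 1 / R"
  have q0: "q > 0" "q < 1" using R0 by (auto simp: q_def)
  have Kq: "K * q < 1" using assms(5) R0 by (simp add: q_def field_simps)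
  define d where "d n = D (x n) (x (Suc n))" for n
  have dstep: "d (Suc n) \<le> q * d n" for n
  proof (cases "even n")
    case True
    have "d (Suc n) \<le> D (T (x (Suc n))) (S (x (Suc (Suc n)))) / R"
      unfolding d_def by (rule E')
    also have "\<dots> = q * d n" using xT[OF True] xS[of "Suc n"] True
      by (simp add: d_def q_def)
    finally show ?thesis .
  next
    case False
    have "d (Suc n) = D (x (Suc (Suc n))) (x (Suc n))" by (simp add: d_def sym)
    also have "\<dots> \<le> D (T (x (Suc (Suc n)))) (S (x (Suc n))) / R" by (rule E')
    also have "\<dots> = q * d n" using xS[OF False] xT[of "Suc n"] False
      by (simp add: d_def q_def sym)
    finally show ?thesis .
  qed
  have dbound: "d n \<le> d 0 * q ^ n" for n
  proof (induction n)
    case 0 then show ?case by simp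
  next
    case (Suc n)
    have "d (Suc n) \<le> q * d n" by (rule dstep)
    also have "\<dots> \<le> q * (d 0 * q ^ n)" using Suc q0 by (simp add: mult_left_mono)
    finally show ?case by (simp add: algebra_simps)
  qed
  have d0: "d 0 \<ge> 0" by (simp add: d_def nn)
  define C where "C = K * d 0 / (1 - K * q)"
  have Ceq: "C * (1 - K * q) = K * d 0" using Kq by (simp add: C_def)
  have Cge: "C \<ge> d 0"
  proof -
    have "d 0 * K * q \<ge> 0" using K1 d0 q0 by simp
    moreover have "d 0 \<le> K * d 0" using K1 d0 mult_right_mono[of 1 K "d 0"] by simp
    ultimately have "d 0 * (1 - K * q) \<le> K * d 0" by (simp add: algebra_simps)
    thus ?thesis using Kq by (simp add: C_def field_simps)
  qed
  have far: "D (x n) (x (n + Suc p)) \<le> C * q ^ n" for n p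
  proof (induction p arbitrary: n)
    case 0
    have "D (x n) (x (n + Suc 0)) = d n" by (simp add: d_def)
    also have "\<dots> \<le> d 0 * q ^ n" by (rule dbound)
    also have "\<dots> \<le> C * q ^ n" using Cge q0 by (simp add: mult_right_mono)
    finally show ?case .
  next
    case (Suc p)
    have "D (x n) (x (n + Suc (Suc p))) \<le> K * (D (x n) (x (Suc n)) + D (x (Suc n)) (x (n + Suc (Suc p))))"
      by (rule tri)
    also have "\<dots> \<le> K * (d 0 * q ^ n + C * q ^ Suc n)"
    proof -
      have a: "D (x n) (x (Suc n)) \<le> d 0 * q ^ n" using dbound d_def by simp
      have b: "D (x (Suc n)) (x (n + Suc (Suc p))) \<le> C * q ^ Suc n"
        using Suc.IH[of "Suc n"] by simp
      show ?thesis using a b K1 by (simp add: mult_left_mono)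
    qed
    also have "\<dots> = q ^ n * (K * d 0 + K * C * q)" by (simp add: algebra_simps)
    also have "K * d 0 + K * C * q = C" using Ceq by (simp add: algebra_simps)
    finally show ?case by (simp add: algebra_simps)
  qed
  define B where "B = C + 2 * K * d 0"
  have diag: "D (x n) (x n) \<le> 2 * K * d 0 * q ^ n" for n
  proof -
    have "D (x n) (x n) \<le> K * (d n + d n)" using tri[of "x n" "x n" "x (Suc n)"]
      by (simp add: d_def sym)
    also have "\<dots> \<le> K * (d 0 * q ^ n + d 0 * q ^ n)" using dbound[of n] K1
      by (simp add: mult_left_mono)
    finally show ?thesis by simp
  qed
  have Cnn: "C \<ge> 0" using Cge d0 by simp
  have bnd: "D (x n) (x m) \<le> B * q ^ min n m" for n m
  proof -
    have qn: "q ^ k \<ge> 0" for k using q0 by simp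
    have pk: "0 \<le> 2 * K * d 0 * q ^ k" for k using K1 d0 qn[of k] by simp
    have "D (x n) (x m) \<le> C * q ^ min n m + 2 * K * d 0 * q ^ min n m"
    proof (cases n m rule: linorder_cases)
      case less
      then obtain p where "m = n + Suc p" by (metis less_imp_Suc_add add_Suc_right)
      with far[of n p] less show ?thesis using pk[of n] by (simp add: min_def)
    next
      case equal
      have "0 \<le> C * q ^ n" using Cnn qn[of n] by simp
      thus ?thesis using diag[of n] equal by simp
    next
      case greater
      then obtain p where "n = m + Suc p" by (metis less_imp_Suc_add add_Suc_right)
      with far[of m p] greater sym[of "x n" "x m"] show ?thesis using pk[of m]
        by (simp add: min_def)
    qed
    thus ?thesis by (simp add: B_def algebra_simps)
  qed
  have lim0: "((\<lambda>(n,m). D (x n) (x m)) \<longlongrightarrow> 0) (sequentially \<times>\<^sub>F sequentially)"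
  proof (rule tendstoI)
    fix e :: real assume e: "e > 0"
    have "(\<lambda>n. B * q ^ n) \<longlonglongrightarrow> B * 0"
      by (intro tendsto_mult tendsto_const LIMSEQ_power_zero) (use q0 in auto)
    hence "\<forall>\<^sub>F n in sequentially. dist (B * q ^ n) 0 < e" using e tendstoD by fastforce
    then obtain N where N: "\<And>n. n \<ge> N \<Longrightarrow> \<bar>B * q ^ n\<bar> < e"
      by (auto simp: eventually_sequentially)
    have Bn: "B \<ge> 0" using Cnn K1 d0 by (simp add: B_def)
    show "\<forall>\<^sub>F y in sequentially \<times>\<^sub>F sequentially. dist (case y of (n, m) \<Rightarrow> D (x n) (x m)) 0 < e"
      unfolding eventually_prod_sequentially
    proof (intro exI allI impI)
      fix m n assume "m \<ge> N" "n \<ge> N"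
      hence "q ^ min n m \<le> q ^ N" using q0 by (intro power_decreasing) auto
      hence "B * q ^ min n m \<le> B * q ^ N" using Bn by (simp add: mult_left_mono)
      hence "D (x n) (x m) < e" using bnd[of n m] N[of N] Bn q0 by simp
      thus "dist (case (n, m) of (n, m) \<Rightarrow> D (x n) (x m)) 0 < e" using nn[of "x n" "x m"] by simp
    qed
  qed
  hence "bml_cauchy D x" unfolding bml_cauchy_def by blast
  then obtain z where z1: "((\<lambda>(n,m). D (x n) (x m)) \<longlongrightarrow> D z z) (sequentially \<times>\<^sub>F sequentially)"
    and z2: "(\<lambda>n. D (x n) z) \<longlonglongrightarrow> D z z"
    using assms(2) unfolding bml_complete_def by blast
  have "D z z = 0"
    using tendsto_unique[OF _ z1 lim0] by (simp add: prod_filter_eq_bot)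
  with z2 have Lz: "(\<lambda>n. D (x n) z) \<longlonglongrightarrow> 0" by simp
  have sub: "(\<lambda>n. D (x (2 * n + c)) z) \<longlonglongrightarrow> 0" for c
  proof -
    have "strict_mono (\<lambda>n. 2 * n + c)" by (auto simp: strict_mono_def)
    from LIMSEQ_subseq_LIMSEQ[OF Lz this] show ?thesis by (simp add: o_def)
  qed
  have Sz: "S z = z"
  proof -
    obtain w where w: "S w = z" using assms(3) by (metis surjD)
    have "D z w \<le> 0"
    proof (rule LIMSEQ_le_const)
      have "(\<lambda>n. K * (D (x (2 * n + 1)) z + D (x (2 * n + 0)) z / R)) \<longlonglongrightarrow> K * (0 + 0 / R)"
        by (intro tendsto_intros sub) (use R0 in auto)
      thus "(\<lambda>n. K * (D (x (2 * n + 1)) z + D (x (2 * n + 0)) z / R)) \<longlonglongrightarrow> 0" by simp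
      show "\<exists>N. \<forall>n\<ge>N. D z w \<le> K * (D (x (2 * n + 1)) z + D (x (2 * n + 0)) z / R)"
      proof (intro exI allI impI)
        fix n
        have "T (x (Suc (2*n))) = x (2*n)" by (rule xT) simp
        hence "D (x (2 * n + 1)) w \<le> D (x (2 * n + 0)) z / R" using E'[of "x (2*n+1)" w] w by simp
        hence "D z (x (2*n+1)) + D (x (2*n+1)) w \<le> D (x (2 * n + 1)) z + D (x (2 * n + 0)) z / R"
          using sym[of z "x (2*n+1)"] by simp
        hence "K * (D z (x (2*n+1)) + D (x (2*n+1)) w) \<le> K * (D (x (2 * n + 1)) z + D (x (2 * n + 0)) z / R)"
          using K1 by (intro mult_left_mono) auto
        thus "D z w \<le> K * (D (x (2 * n + 1)) z + D (x (2 * n + 0)) z / R)"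
          using tri[of z w "x (2*n+1)"] by linarith
      qed
    qed
    hence "D z w = 0" using nn[of z w] by simp
    hence "z = w" by (rule z0)
    thus ?thesis using w by simp
  qed
  have Tz: "T z = z"
  proof -
    obtain u where u: "T u = z" using assms(4) by (metis surjD)
    have "D z u \<le> 0"
    proof (rule LIMSEQ_le_const)
      have "(\<lambda>n. K * (D (x (2 * n + 2)) z + D (x (2 * n + 1)) z / R)) \<longlonglongrightarrow> K * (0 + 0 / R)"
        by (intro tendsto_intros sub) (use R0 in auto)
      thus "(\<lambda>n. K * (D (x (2 * n + 2)) z + D (x (2 * n + 1)) z / R)) \<longlonglongrightarrow> 0" by simp
      show "\<exists>N. \<forall>n\<ge>N. D z u \<le> K * (D (x (2 * n + 2)) z + D (x (2 * n + 1)) z / R)"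
      proof (intro exI allI impI)
        fix n
        have "S (x (Suc (2*n+1))) = x (2*n+1)" by (rule xS) simp
        hence "D u (x (2 * n + 2)) \<le> D z (x (2 * n + 1)) / R" using E'[of u "x (2*n+2)"] u
          by (simp add: numeral_2_eq_2)
        hence "D (x (2 * n + 2)) u \<le> D (x (2 * n + 1)) z / R" using sym by metis
        hence "D z (x (2*n+2)) + D (x (2*n+2)) u \<le> D (x (2 * n + 2)) z + D (x (2 * n + 1)) z / R"
          using sym[of z "x (2*n+2)"] by simp
        hence "K * (D z (x (2*n+2)) + D (x (2*n+2)) u) \<le> K * (D (x (2 * n + 2)) z + D (x (2 * n + 1)) z / R)"
          using K1 by (intro mult_left_mono) auto
        thus "D z u \<le> K * (D (x (2 * n + 2)) z + D (x (2 * n + 1)) z / R)"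
          using tri[of z u "x (2*n+2)"] by linarith
      qed
    qed
    hence "D z u = 0" using nn[of z u] by simp
    hence "z = u" by (rule z0)
    thus ?thesis using u by simp
  qed
  show ?thesis using Tz Sz uniq by blast
qed

end
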